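(* Let $R$ be a semiring and let $\theta$ be a $k$-congruence on $R$. Then $R/\theta$ has a zero $0_\theta$, $0_\theta$ is an ideal of $R$, and $\kappa_{0_\theta}=\theta$.
   Context: A semiring $(R,+,\cdot)$ is a set with two binary operations such that $(R,+)$ is a commutative semigroup, $(R,\cdot)$ is a semigroup, and multiplication distributes over addition from both sides; no additive neutral element or identity is assumed. An element $0$ of a semiring $S$ is a zero of $S$ if $0+s=s$ and $0s=s0=0$ for all $s\in S$. An ideal of $R$ is a nonempty subset $A\subseteq R$ with $a+b\in A$ and $ra,ar\in A$ for all $a,b\in A$, $r\in R$. A congruence on $R$ is an equivalence relation $\equiv$ such that $a\equiv b$ implies $a+c\equiv b+c$, $ac\equiv bc$, $ca\equiv cb$ for all $a,b,c\in R$; $R/\theta$ denotes the quotient semiring of $\theta$-classes with $[x]+[y]=[x+y]$, $[x][y]=[xy]$; a zero of $R/\theta$ is a $\theta$-class, hence a subset of $R$. For an ideal $A$ of $R$, $\kappa_A$ is the congruence defined by $x\,\kappa_A\,y$ iff $x+a=y+b$ for some $a,b\in A$. A congruence $\theta$ is a $k$-congruence if $\theta=\kappa_A$ for some ideal $A$ of $R$. Throughout, $|R|\geq 2$. *)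

theory Defs
  imports Main
begin

text \<open>A semiring in the paper's sense (no zero, no identity) is the type class
  semiring: commutative additive semigroup, multiplicative semigroup, two-sided distributivity.\<close>

definition sr_ideal :: "'a::semiring set \<Rightarrow> bool" where
  "sr_ideal A \<longleftrightarrow> A \<noteq> {} \<and> (\<forall>a\<in>A. \<forall>b\<in>A. a + b \<in> A) \<and>
     (\<forall>a\<in>A. \<forall>r. r * a \<in> A \<and> a * r \<in> A)"

definition sr_congruence :: "('a::semiring) rel \<Rightarrow> bool" where
  "sr_congruence \<theta> \<longleftrightarrow> equiv UNIV \<theta> \<and>
     (\<forall>a b c. (a, b) \<in> \<theta> \<longrightarrow> (a + c, b + c) \<in> \<theta> \<and> (a * c, b * c) \<in> \<theta> \<and> (c * a, c * b) \<in> \<theta>)"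

definition kappa :: "'a::semiring set \<Rightarrow> 'a rel" where
  "kappa A = {(x, y). \<exists>a\<in>A. \<exists>b\<in>A. x + a = y + b}"

definition k_congruence :: "('a::semiring) rel \<Rightarrow> bool" where
  "k_congruence \<theta> \<longleftrightarrow> (\<exists>A. sr_ideal A \<and> \<theta> = kappa A)"

text \<open>Z is a zero of the quotient semiring R/theta: Z is a theta-class, and for every
  class [s] we have Z + [s] = [s], Z [s] = Z, [s] Z = Z, where the quotient operations
  are computed on representatives ([x]+[y] = [x+y], [x][y] = [xy]).\<close>

definition quot_zero :: "('a::semiring) rel \<Rightarrow> 'a set \<Rightarrow> bool" where
  "quot_zero \<theta> Z \<longleftrightarrow> Z \<in> UNIV // \<theta> \<and>
     (\<forall>z\<in>Z. \<forall>s. \<theta> `` {z + s} = \<theta> `` {s} \<and> \<theta> `` {z * s} = Z \<and> \<theta> `` {s * z} = Z)"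

end

theory Submission
  imports Defs
begin

theorem lemma3p6:
  fixes \<theta> :: "('a::semiring) rel"
  assumes "\<exists>x y :: 'a. x \<noteq> y"
    and "sr_congruence \<theta>"
    and "k_congruence \<theta>"
  shows "\<exists>Z. quot_zero \<theta> Z \<and> sr_ideal Z \<and> kappa Z = \<theta>"
proof -
  obtain A where A: "sr_ideal A" and th: "\<theta> = kappa A"
    using assms(3) k_congruence_def by blast
  have eq: "equiv UNIV \<theta>" and cg: "\<And>a b c. (a, b) \<in> \<theta> \<Longrightarrow> (a + c, b + c) \<in> \<theta> \<and> (a * c, b * c) \<in> \<theta> \<and> (c * a, c * b) \<in> \<theta>"
    using assms(2) sr_congruence_def by blast+
  have sym: "\<And>x y. (x,y) \<in> \<theta> \<Longrightarrow> (y,x) \<in> \<theta>" using eq by (meson equivE symD)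
  have tr: "\<And>x y z. (x,y) \<in> \<theta> \<Longrightarrow> (y,z) \<in> \<theta> \<Longrightarrow> (x,z) \<in> \<theta>" using eq by (meson equivE transD)
  have rf: "\<And>x. (x,x) \<in> \<theta>" using eq by (meson equivE UNIV_I refl_onD)
  obtain a0 where a0: "a0 \<in> A" using A unfolding sr_ideal_def by blast
  have Aadd: "\<And>a b. a \<in> A \<Longrightarrow> b \<in> A \<Longrightarrow> a + b \<in> A" using A unfolding sr_ideal_def by blast
  have Amul: "\<And>a r. a \<in> A \<Longrightarrow> r * a \<in> A \<and> a * r \<in> A" using A unfolding sr_ideal_def by blast
  have inA: "\<And>a. a \<in> A \<Longrightarrow> (a, a0) \<in> \<theta>"
  proof -
    fix a assume "a \<in> A"
    have "a + a0 = a0 + a" by (simp add: add.commute)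
    thus "(a, a0) \<in> \<theta>" using \<open>a \<in> A\<close> a0 th kappa_def by blast
  qed
  have shift: "\<And>x. (x + a0, x) \<in> \<theta>"
  proof -
    fix x
    have "x + a0 + a0 = x + (a0 + a0)" by (simp add: add.assoc)
    thus "(x + a0, x) \<in> \<theta>" using a0 Aadd[OF a0 a0] th kappa_def by blast
  qed
  define Z where "Z = \<theta> `` {a0}"
  have Zmem: "\<And>z. z \<in> Z \<longleftrightarrow> (z, a0) \<in> \<theta>" unfolding Z_def using sym by blast
  have AZ: "A \<subseteq> Z" using inA Zmem by blast
  have addZ: "\<And>z s. z \<in> Z \<Longrightarrow> (z + s, s) \<in> \<theta>"
  proof -
    fix z s assume "z \<in> Z"
    hence "(z + s, a0 + s) \<in> \<theta>" using Zmem cg by blast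
    moreover have "(a0 + s, s) \<in> \<theta>" using shift[of s] by (simp add: add.commute)
    ultimately show "(z + s, s) \<in> \<theta>" using tr by blast
  qed
  have mulZ: "\<And>z s. z \<in> Z \<Longrightarrow> z * s \<in> Z \<and> s * z \<in> Z"
  proof -
    fix z s assume "z \<in> Z"
    hence "(z * s, a0 * s) \<in> \<theta>" "(s * z, s * a0) \<in> \<theta>" using Zmem cg by blast+
    moreover have "(a0 * s, a0) \<in> \<theta>" "(s * a0, a0) \<in> \<theta>" using inA Amul a0 by blast+
    ultimately show "z * s \<in> Z \<and> s * z \<in> Z" using tr Zmem by blast
  qed
  have classZ: "\<And>w. w \<in> Z \<Longrightarrow> \<theta> `` {w} = Z"
  proof -
    fix w assume "w \<in> Z"
    hence "(w, a0) \<in> \<theta>" using Zmem by blast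
    thus "\<theta> `` {w} = Z" unfolding Z_def by (rule equiv_class_eq[OF eq])
  qed
  have qz: "quot_zero \<theta> Z"
    unfolding quot_zero_def
  proof (intro conjI ballI allI)
    show "Z \<in> UNIV // \<theta>" unfolding Z_def by (simp add: quotientI)
  next
    fix z s assume z: "z \<in> Z"
    show "\<theta> `` {z + s} = \<theta> `` {s}" using addZ[OF z] eq by (simp add: equiv_class_eq)
    show "\<theta> `` {z * s} = Z" using mulZ[OF z] classZ by blast
    show "\<theta> `` {s * z} = Z" using mulZ[OF z] classZ by blast
  qed
  have idZ: "sr_ideal Z"
    unfolding sr_ideal_def
  proof (intro conjI ballI allI)
    show "Z \<noteq> {}" using AZ a0 by blast
  next
    fix a b assume a: "a \<in> Z" and b: "b \<in> Z"
    have "(a + b, b) \<in> \<theta>" using addZ[OF a] .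
    thus "a + b \<in> Z" using b Zmem tr by blast
  next
    fix a r assume "a \<in> Z" thus "r * a \<in> Z" "a * r \<in> Z" using mulZ by blast+
  qed
  have "kappa Z = \<theta>"
  proof
    show "\<theta> \<subseteq> kappa Z" using th AZ unfolding kappa_def by blast
  next
    show "kappa Z \<subseteq> \<theta>"
    proof
      fix p assume "p \<in> kappa Z"
      then obtain x y z1 z2 where p: "p = (x, y)" and z: "z1 \<in> Z" "z2 \<in> Z" and e: "x + z1 = y + z2"
        unfolding kappa_def by blast
      have "(z1 + x, x) \<in> \<theta>" "(z2 + y, y) \<in> \<theta>" using addZ z by blast+
      hence "(x + z1, x) \<in> \<theta>" "(y + z2, y) \<in> \<theta>" by (simp_all add: add.commute)
      hence "(x, x + z1) \<in> \<theta>" "(y + z2, y) \<in> \<theta>" using sym by blast+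
      hence "(x, y) \<in> \<theta>" using e tr by simp
      thus "p \<in> \<theta>" using p by simp
    qed
  qed
  thus ?thesis using qz idZ by blast
qed

end
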